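(* Let $(A,B,\mathfrak H)$ be a P-module. Then either every non-zero vector of $\mathfrak H$ is annihilated by all rays, or there exists a vector of $\mathfrak H$ contained in some periodic ray $p$.
   Context: A P-module is $(A,B,\mathfrak H)$ with $\mathfrak H$ a finite-dimensional complex Hilbert space and $A,B$ operators with $A^*A+B^*B=\mathrm{id}$. A ray is an infinite binary sequence $p=x_1x_2\cdots$; $p_n=x_1\cdots x_n$. For a finite binary word $w=x_1\cdots x_n$, $w\xi:=X_{x_n}\cdots X_{x_1}\xi$ where $X_0=A$, $X_1=B$. A non-zero vector $\xi$ is contained in the ray $p$ if $\|p_n\xi\|=\|\xi\|$ for all $n$; it is annihilated by all rays if $\lim_n\|q_n\xi\|=0$ for every ray $q$. A ray is periodic if it equals $w^\infty$ for some finite non-empty word $w$. *)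

theory Defs
  imports "HOL-Analysis.Analysis"
begin

text \<open>The finite-dimensional complex Hilbert space is modelled as complex ^ 'n
  (standard inner product, Euclidean norm); operators are complex matrices.\<close>

definition adjoint_mat :: "complex ^ 'n ^ 'n \<Rightarrow> complex ^ 'n ^ 'n" where
  "adjoint_mat M = (\<chi> i j. cnj (M $ j $ i))"

definition P_module :: "complex ^ 'n ^ 'n \<Rightarrow> complex ^ 'n ^ 'n \<Rightarrow> bool" where
  "P_module A B \<longleftrightarrow> adjoint_mat A ** A + adjoint_mat B ** B = mat 1"

definition word_act :: "complex ^ 'n ^ 'n \<Rightarrow> complex ^ 'n ^ 'n \<Rightarrow> bool list \<Rightarrow> complex ^ 'n \<Rightarrow> complex ^ 'n" where
  "word_act A B w \<xi> = fold (\<lambda>b v. (if b then B else A) *v v) w \<xi>"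

definition ray_prefix :: "(nat \<Rightarrow> bool) \<Rightarrow> nat \<Rightarrow> bool list" where
  "ray_prefix p n = map p [0..<n]"

definition contained_in_ray :: "complex ^ 'n ^ 'n \<Rightarrow> complex ^ 'n ^ 'n \<Rightarrow> complex ^ 'n \<Rightarrow> (nat \<Rightarrow> bool) \<Rightarrow> bool" where
  "contained_in_ray A B \<xi> p \<longleftrightarrow> \<xi> \<noteq> 0 \<and> (\<forall>n. norm (word_act A B (ray_prefix p n) \<xi>) = norm \<xi>)"

definition annihilated_by_all_rays :: "complex ^ 'n ^ 'n \<Rightarrow> complex ^ 'n ^ 'n \<Rightarrow> complex ^ 'n \<Rightarrow> bool" where
  "annihilated_by_all_rays A B \<xi> \<longleftrightarrow>
     (\<forall>q. (\<lambda>n. norm (word_act A B (ray_prefix q n) \<xi>)) \<longlonglongrightarrow> 0)"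

definition periodic_ray :: "(nat \<Rightarrow> bool) \<Rightarrow> bool" where
  "periodic_ray p \<longleftrightarrow> (\<exists>w. w \<noteq> [] \<and> (\<forall>i. p i = w ! (i mod length w)))"

end

theory Submission
  imports Defs
begin

definition Mop :: "complex^'n^'n \<Rightarrow> complex^'n^'n \<Rightarrow> nat \<Rightarrow> complex^'n \<Rightarrow> complex^'n" where
  "Mop A B t = ((\<lambda>x. (A + B) *v x) ^^ t)"

definition goodv :: "complex^'n^'n \<Rightarrow> complex^'n^'n \<Rightarrow> complex^'n \<Rightarrow> bool" where
  "goodv A B x \<longleftrightarrow> (\<forall>t. A *v Mop A B t x = 0 \<or> B *v Mop A B t x = 0)"

lemma Mop_0[simp]: "Mop A B 0 x = x" by (simp add: Mop_def)
lemma Mop_Suc: "Mop A B (Suc t) x = (A + B) *v Mop A B t x" by (simp add: Mop_def)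
lemma Mop_add: "Mop A B (t + s) x = Mop A B t (Mop A B s x)" by (simp add: Mop_def funpow_add)

lemma linear_Mop: "linear (Mop A B t)"
proof (induction t)
  case 0 then show ?case by (simp add: Mop_def linear_id[unfolded id_def])
next
  case (Suc t)
  have "Mop A B (Suc t) = (\<lambda>x. (A + B) *v x) \<circ> Mop A B t" by (auto simp: Mop_Suc)
  moreover have "linear ((\<lambda>x. (A + B) *v x) \<circ> Mop A B t)"
    by (rule linear_compose[OF Suc matrix_vector_mul_linear])
  ultimately show ?case by metis
qed


definition VV :: "complex^'n^'n \<Rightarrow> complex^'n^'n \<Rightarrow> complex^'n \<Rightarrow> (complex^'n) set" where
  "VV A B y = {x. \<forall>t. (A *v Mop A B t y = 0 \<longrightarrow> A *v Mop A B t x = 0) \<and> (B *v Mop A B t y = 0 \<longrightarrow> B *v Mop A B t x = 0)}"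

definition VL :: "complex^'n^'n \<Rightarrow> complex^'n^'n \<Rightarrow> nat \<Rightarrow> complex^'n \<Rightarrow> (complex^'n) set" where
  "VL A B L y = {x. \<forall>t<L. (A *v Mop A B t y = 0 \<longrightarrow> A *v Mop A B t x = 0) \<and> (B *v Mop A B t y = 0 \<longrightarrow> B *v Mop A B t x = 0)}"

lemma linear_MMop: "linear (\<lambda>x. M *v Mop A B t x)"
  using linear_compose[OF linear_Mop matrix_vector_mul_linear[of M]] by (simp add: comp_def)

lemma subspace_family:
  assumes "\<And>t. linear (f t)" "\<And>t. linear (g t)"
  shows "subspace {x. \<forall>t. (P t \<longrightarrow> f t x = 0) \<and> (Q t \<longrightarrow> g t x = 0)}"
  unfolding subspace_def
  using assms by (auto simp: linear_0 linear_add linear_scale)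

lemma subspace_VV: "subspace (VV A B y)"
  unfolding VV_def by (rule subspace_family[where f="\<lambda>t x. A *v Mop A B t x" and g="\<lambda>t x. B *v Mop A B t x", OF linear_MMop linear_MMop])

lemma subspace_VL: "subspace (VL A B L y)"
proof -
  have eq: "VL A B L y = {x. \<forall>t. ((t < L \<and> A *v Mop A B t y = 0) \<longrightarrow> A *v Mop A B t x = 0) \<and>
      ((t < L \<and> B *v Mop A B t y = 0) \<longrightarrow> B *v Mop A B t x = 0)}"
    by (auto simp: VL_def)
  show ?thesis unfolding eq
    by (rule subspace_family[where f="\<lambda>t x. A *v Mop A B t x" and g="\<lambda>t x. B *v Mop A B t x", OF linear_MMop linear_MMop])
qed

lemma self_VV: "y \<in> VV A B y" by (simp add: VV_def)

lemma lim_MMop: "X \<longlonglongrightarrow> x \<Longrightarrow> (\<lambda>j. M *v Mop A B t (X j)) \<longlonglongrightarrow> M *v Mop A B t x"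
  using bounded_linear.tendsto[OF linear_conv_bounded_linear[THEN iffD1, OF linear_MMop]] by blast

lemma lim_Mop: "X \<longlonglongrightarrow> x \<Longrightarrow> (\<lambda>j. Mop A B t (X j)) \<longlonglongrightarrow> Mop A B t x"
  using bounded_linear.tendsto[OF linear_conv_bounded_linear[THEN iffD1, OF linear_Mop]] by blast

lemma word_act_Suc:
  "word_act A B (ray_prefix p (Suc n)) \<xi> = (if p n then B else A) *v word_act A B (ray_prefix p n) \<xi>"
  by (simp add: word_act_def ray_prefix_def)

lemma inner_complex_Re: "(a::complex) \<bullet> b = Re (a * cnj b)"
  by (simp add: inner_complex_def)

lemma inner_adj:
  fixes M :: "complex^'n^'n"
  shows "(M *v x) \<bullet> y = x \<bullet> (adjoint_mat M *v y)"
proof -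
  have "(M *v x) \<bullet> y = (\<Sum>i\<in>UNIV. \<Sum>j\<in>UNIV. Re (M$i$j * x$j * cnj (y$i)))"
    by (simp add: inner_vec_def matrix_vector_mult_def inner_complex_Re sum_distrib_right Re_sum)
  also have "\<dots> = (\<Sum>j\<in>UNIV. \<Sum>i\<in>UNIV. Re (M$i$j * x$j * cnj (y$i)))"
    by (rule sum.swap)
  also have "\<dots> = x \<bullet> (adjoint_mat M *v y)"
    by (simp add: inner_vec_def matrix_vector_mult_def inner_complex_Re adjoint_mat_def sum_distrib_left Re_sum mult_ac)
  finally show ?thesis .
qed
lemma norm_AB:
  fixes A B :: "complex^'n^'n"
  assumes "P_module A B"
  shows "(norm (A *v x))^2 + (norm (B *v x))^2 = (norm x)^2"
proof -
  have "(norm (A *v x))^2 + (norm (B *v x))^2 = (A *v x) \<bullet> (A *v x) + (B *v x) \<bullet> (B *v x)"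
    by (simp add: power2_norm_eq_inner)
  also have "\<dots> = x \<bullet> (adjoint_mat A *v (A *v x)) + x \<bullet> (adjoint_mat B *v (B *v x))"
    by (simp add: inner_adj)
  also have "\<dots> = x \<bullet> ((adjoint_mat A ** A + adjoint_mat B ** B) *v x)"
    by (simp add: matrix_vector_mul_assoc matrix_vector_mult_add_rdistrib inner_add_right)
  also have "\<dots> = (norm x)^2" using assms by (simp add: P_module_def power2_norm_eq_inner)
  finally show ?thesis .
qed

context
  fixes A B :: "complex^'n^'n"
  assumes PM: "P_module A B"
begin

lemma killA: "A *v x = 0 \<Longrightarrow> norm (B *v x) = norm x"
  using norm_AB[OF PM, of x] by (simp add: power2_eq_iff_nonneg)

lemma killB: "B *v x = 0 \<Longrightarrow> norm (A *v x) = norm x"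
  using norm_AB[OF PM, of x] by (simp add: power2_eq_iff_nonneg)

lemma kill_both: "A *v x = 0 \<Longrightarrow> B *v x = 0 \<Longrightarrow> x = 0"
  using killA by fastforce

lemma good_step_norm: "A *v x = 0 \<or> B *v x = 0 \<Longrightarrow> norm ((A + B) *v x) = norm x"
  using killA killB by (auto simp: matrix_vector_mult_add_rdistrib)

lemma good_Mop: "goodv A B x \<Longrightarrow> goodv A B (Mop A B s x)"
  by (simp add: goodv_def Mop_add[symmetric])

lemma good_norm: "goodv A B x \<Longrightarrow> norm (Mop A B t x) = norm x"
proof (induction t)
  case (Suc t)
  then have "A *v Mop A B t x = 0 \<or> B *v Mop A B t x = 0" by (simp add: goodv_def)
  then show ?case using Suc good_step_norm by (simp add: Mop_Suc)
qed simp


lemma VV_good: "goodv A B y \<Longrightarrow> x \<in> VV A B y \<Longrightarrow> goodv A B x"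
  unfolding goodv_def VV_def by blast

lemma Mop_image_VV: "Mop A B s ` VV A B y \<subseteq> VV A B (Mop A B s y)"
  by (auto simp: VV_def Mop_add[symmetric])

lemma dim_VV_mono:
  assumes g: "goodv A B y"
  shows "dim (VV A B y) \<le> dim (VV A B (Mop A B s y))"
proof -
  have inj: "inj_on (Mop A B s) (span (VV A B y))"
  proof (rule inj_onI)
    fix a b assume a: "a \<in> span (VV A B y)" and b: "b \<in> span (VV A B y)" and e: "Mop A B s a = Mop A B s b"
    have sp: "span (VV A B y) = VV A B y" using subspace_VV[of A B y] by simp
    have "a - b \<in> VV A B y" using a b subspace_VV[of A B y] unfolding sp by (simp add: subspace_diff)
    then have gab: "goodv A B (a - b)" using VV_good[OF g] by blast
    have "Mop A B s (a - b) = 0" using e linear_diff[OF linear_Mop, of A B s a b] by simp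
    then have "norm (a - b) = 0" using good_norm[OF gab, of s] by simp
    then show "a = b" by simp
  qed
  have "dim (VV A B y) = dim (Mop A B s ` VV A B y)"
    using dim_image_eq[OF linear_Mop inj] by simp
  also have "\<dots> \<le> dim (VV A B (Mop A B s y))"
    by (rule dim_subset[OF Mop_image_VV])
  finally show ?thesis .
qed

lemma step2:
  assumes g0: "goodv A B y00" and n0: "y00 \<noteq> 0"
  shows "\<exists>y p. goodv A B y \<and> y \<noteq> 0 \<and> p > 0 \<and> (\<forall>t. A *v Mop A B t y = 0 \<longleftrightarrow> A *v Mop A B (t + p) y = 0)"
proof -
  define D where "D = DIM(complex^'n)"
  obtain y0 where y0: "goodv A B y0 \<and> y0 \<noteq> 0"
    and ymin: "\<forall>y. goodv A B y \<and> y \<noteq> 0 \<longrightarrow> D - dim (VV A B y0) \<le> D - dim (VV A B y)"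
    using ex_has_least_nat[of "\<lambda>y. goodv A B y \<and> y \<noteq> 0" y00 "\<lambda>y. D - dim (VV A B y)"] g0 n0 by blast
  have ymax: "dim (VV A B y) \<le> dim (VV A B y0)" if "goodv A B y" "y \<noteq> 0" for y
    using ymin that dim_subset_UNIV[of "VV A B y"] dim_subset_UNIV[of "VV A B y0"] unfolding D_def by force
  define k where "k = dim (VV A B y0)"
  define ys where "ys n = Mop A B n y0" for n
  have gys: "goodv A B (ys n)" for n using good_Mop y0 by (simp add: ys_def)
  have nys: "norm (ys n) = norm y0" for n using good_norm y0 by (simp add: ys_def)
  have nz: "ys n \<noteq> 0" for n using nys y0 by (metis norm_eq_zero)
  have dimk: "dim (VV A B (ys n)) = k" for n
    using dim_VV_mono[of y0 n] y0 ymax[OF gys nz, of n] by (simp add: k_def ys_def)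
  have "bounded (range ys)" using nys by (auto simp: bounded_iff)
  then obtain z a where a: "strict_mono a" and lim: "(ys \<circ> a) \<longlonglongrightarrow> z"
    using bounded_imp_convergent_subsequence by blast
  have limj: "(\<lambda>j. ys (a j)) \<longlonglongrightarrow> z" using lim by (simp add: comp_def)
  have nzz: "norm z = norm y0"
  proof -
    have "(\<lambda>j. norm (ys (a j))) \<longlonglongrightarrow> norm z" using tendsto_norm[OF limj] .
    then show ?thesis using nys by (simp add: LIMSEQ_const_iff)
  qed
  have gz: "goodv A B z"
    unfolding goodv_def
  proof
    fix t
    have l: "(\<lambda>j. norm (A *v Mop A B t (ys (a j))) * norm (B *v Mop A B t (ys (a j))))
        \<longlonglongrightarrow> norm (A *v Mop A B t z) * norm (B *v Mop A B t z)"
      by (intro tendsto_intros lim_MMop limj)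
    have "(\<lambda>j. norm (A *v Mop A B t (ys (a j))) * norm (B *v Mop A B t (ys (a j)))) = (\<lambda>j. 0)"
      using gys unfolding goodv_def by force
    then have "(\<lambda>j. 0::real) \<longlonglongrightarrow> norm (A *v Mop A B t z) * norm (B *v Mop A B t z)"
      using l by metis
    then have "norm (A *v Mop A B t z) * norm (B *v Mop A B t z) = 0"
      by (simp only: LIMSEQ_const_iff)
    then show "A *v Mop A B t z = 0 \<or> B *v Mop A B t z = 0" by simp
  qed
  have z0: "z \<noteq> 0" using nzz y0 by auto
  have nzt: "Mop A B t z \<noteq> 0" for t using good_norm[OF gz, of t] z0 by (metis norm_eq_zero)
  obtain L where Lmin: "\<forall>L'. dim (VL A B L z) \<le> dim (VL A B L' z)"
    using ex_has_least_nat[of "\<lambda>_. True" 0 "\<lambda>L. dim (VL A B L z)"] by blast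
  have VLz: "VL A B L z \<subseteq> VV A B z"
  proof
    fix x assume x: "x \<in> VL A B L z"
    show "x \<in> VV A B z" unfolding VV_def
    proof (intro CollectI allI)
      fix t
      define L' where "L' = max L (Suc t)"
      have sub: "VL A B L' z \<subseteq> VL A B L z" by (auto simp: VL_def L'_def)
      have "VL A B L' z = VL A B L z"
        by (rule subspace_dim_equal[OF subspace_VL subspace_VL sub]) (use Lmin in blast)
      then have "x \<in> VL A B L' z" using x by simp
      then show "(A *v Mop A B t z = 0 \<longrightarrow> A *v Mop A B t x = 0) \<and> (B *v Mop A B t z = 0 \<longrightarrow> B *v Mop A B t x = 0)"
        by (auto simp: VL_def L'_def)
    qed
  qed
  have ev1: "\<forall>t\<in>{..<L}. eventually (\<lambda>j. (A *v Mop A B t z = 0 \<longrightarrow> A *v Mop A B t (ys (a j)) = 0) \<and>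
        (B *v Mop A B t z = 0 \<longrightarrow> B *v Mop A B t (ys (a j)) = 0)) sequentially"
  proof
    fix t
    have gA: "eventually (\<lambda>j. A *v Mop A B t z = 0 \<longrightarrow> A *v Mop A B t (ys (a j)) = 0) sequentially"
    proof (cases "A *v Mop A B t z = 0")
      case True
      then have "B *v Mop A B t z \<noteq> 0" using kill_both nzt by blast
      then have "eventually (\<lambda>j. B *v Mop A B t (ys (a j)) \<noteq> 0) sequentially"
        using tendsto_imp_eventually_ne[OF lim_MMop[OF limj]] by blast
      then show ?thesis
        by (rule eventually_mono) (use gys in \<open>auto simp: goodv_def\<close>)
    qed simp
    have gB: "eventually (\<lambda>j. B *v Mop A B t z = 0 \<longrightarrow> B *v Mop A B t (ys (a j)) = 0) sequentially"
    proof (cases "B *v Mop A B t z = 0")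
      case True
      then have "A *v Mop A B t z \<noteq> 0" using kill_both nzt by blast
      then have "eventually (\<lambda>j. A *v Mop A B t (ys (a j)) \<noteq> 0) sequentially"
        using tendsto_imp_eventually_ne[OF lim_MMop[OF limj]] by blast
      then show ?thesis
        by (rule eventually_mono) (use gys in \<open>auto simp: goodv_def\<close>)
    qed simp
    show "eventually (\<lambda>j. (A *v Mop A B t z = 0 \<longrightarrow> A *v Mop A B t (ys (a j)) = 0) \<and>
        (B *v Mop A B t z = 0 \<longrightarrow> B *v Mop A B t (ys (a j)) = 0)) sequentially"
      using eventually_conj[OF gA gB] .
  qed
  have "eventually (\<lambda>j. \<forall>t\<in>{..<L}. (A *v Mop A B t z = 0 \<longrightarrow> A *v Mop A B t (ys (a j)) = 0) \<and>
        (B *v Mop A B t z = 0 \<longrightarrow> B *v Mop A B t (ys (a j)) = 0)) sequentially"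
    using eventually_ball_finite[OF _ ev1] by simp
  then obtain J where J: "\<And>j. j \<ge> J \<Longrightarrow> \<forall>t\<in>{..<L}. (A *v Mop A B t z = 0 \<longrightarrow> A *v Mop A B t (ys (a j)) = 0) \<and>
        (B *v Mop A B t z = 0 \<longrightarrow> B *v Mop A B t (ys (a j)) = 0)"
    unfolding eventually_sequentially by blast
  have Veq: "VV A B (ys (a j)) = VV A B z" if "j \<ge> J" for j
  proof -
    have "VV A B (ys (a j)) \<subseteq> VL A B L z"
      using J[OF that] by (auto simp: VV_def VL_def)
    then have sub: "VV A B (ys (a j)) \<subseteq> VV A B z" using VLz by blast
    show ?thesis
      by (rule subspace_dim_equal[OF subspace_VV subspace_VV sub])
         (use dimk ymax[OF gz z0] k_def in simp)
  qed
  define i where "i = a J"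
  define i' where "i' = a (Suc J)"
  have ii: "i < i'" using a by (simp add: i_def i'_def strict_mono_def)
  have VV_eq: "VV A B (ys i) = VV A B (ys i')" using Veq[of J] Veq[of "Suc J"] by (simp add: i_def i'_def)
  define p where "p = i' - i"
  have shift: "Mop A B (t + p) (ys i) = Mop A B t (ys i')" for t
    using ii by (simp add: ys_def Mop_add[symmetric] p_def)
  have per: "A *v Mop A B t (ys i) = 0 \<longleftrightarrow> A *v Mop A B (t + p) (ys i) = 0" for t
  proof -
    have "ys i' \<in> VV A B (ys i)" using VV_eq self_VV by metis
    moreover have "ys i \<in> VV A B (ys i')" using VV_eq self_VV by metis
    ultimately show ?thesis unfolding shift by (auto simp: VV_def)
  qed
  show ?thesis
  proof (intro exI conjI)
    show "p > 0" using ii by (simp add: p_def)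
  qed (use gys[of i] nz[of i] per in auto)
qed


lemma step1:
  assumes xn: "\<not> (\<lambda>n. norm (word_act A B (ray_prefix q n) \<xi>)) \<longlonglongrightarrow> 0"
  shows "\<exists>\<eta>. goodv A B \<eta> \<and> \<eta> \<noteq> 0"
proof -
  define v where "v n = word_act A B (ray_prefix q n) \<xi>" for n
  define X where "X n = (if q n then B else A)" for n
  define Y where "Y n = (if q n then A else B)" for n
  define e where "e n = Y n *v v n" for n
  have vS: "v (Suc n) = X n *v v n" for n by (simp add: v_def X_def word_act_Suc)
  have nid: "(norm (v (Suc n)))^2 + (norm (e n))^2 = (norm (v n))^2" for n
    using norm_AB[OF PM, of "v n"] by (cases "q n") (simp_all add: vS X_def e_def Y_def)
  have nle: "norm (v (Suc n)) \<le> norm (v n)" for n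
  proof -
    have "(norm (v (Suc n)))^2 \<le> (norm (v n))^2" using nid[of n]
      by (metis le_add_same_cancel1 zero_le_power2)
    then show ?thesis using power2_le_imp_le norm_ge_zero by blast
  qed
  have dec: "decseq (\<lambda>n. norm (v n))" using nle by (simp add: decseq_SucI)
  obtain L where L: "(\<lambda>n. norm (v n)) \<longlonglongrightarrow> L" and Lle: "\<forall>i. L \<le> norm (v i)"
    using decseq_convergent[OF dec, of 0] by auto
  have L0: "L \<noteq> 0" using L xn by (auto simp: v_def)
  have "0 \<le> L" by (rule LIMSEQ_le_const[OF L]) auto
  then have Lpos: "L > 0" using L0 by simp
  have vle: "norm (v n) \<le> norm \<xi>" for n
  proof -
    have v0: "v 0 = \<xi>" by (simp add: v_def word_act_def ray_prefix_def)
    show ?thesis using dec[unfolded decseq_def, rule_format, of 0 n] v0 by simp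
  qed
  have e2: "(\<lambda>n. (norm (e n))^2) \<longlonglongrightarrow> 0"
  proof -
    have "(\<lambda>n. (norm (v n))^2 - (norm (v (Suc n)))^2) \<longlonglongrightarrow> L^2 - L^2"
      by (intro tendsto_intros L LIMSEQ_Suc[OF L])
    moreover have "(\<lambda>n. (norm (v n))^2 - (norm (v (Suc n)))^2) = (\<lambda>n. (norm (e n))^2)"
      using nid by (auto simp: algebra_simps)
    ultimately show ?thesis by simp
  qed
  have e0: "e \<longlonglongrightarrow> 0"
  proof -
    have "(\<lambda>n. sqrt ((norm (e n))^2)) \<longlonglongrightarrow> sqrt 0" by (intro tendsto_intros e2)
    then have "(\<lambda>n. norm (e n)) \<longlonglongrightarrow> 0" by simp
    then show ?thesis by (simp add: tendsto_norm_zero_iff)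
  qed
  have vS2: "v (Suc n) = (A + B) *v v n - e n" for n
    by (cases "q n") (simp_all add: vS X_def e_def Y_def matrix_vector_mult_add_rdistrib)
  have Dt: "(\<lambda>n. v (n + t) - Mop A B t (v n)) \<longlonglongrightarrow> 0" for t
  proof (induction t)
    case 0 then show ?case by simp
  next
    case (Suc t)
    have eq: "v (n + Suc t) - Mop A B (Suc t) (v n) = (A + B) *v (v (n + t) - Mop A B t (v n)) - e (n + t)" for n
      by (simp add: vS2 Mop_Suc matrix_vector_mult_diff_distrib)
    have l1: "(\<lambda>n. (A + B) *v (v (n + t) - Mop A B t (v n))) \<longlonglongrightarrow> (A + B) *v 0"
      using lim_MMop[OF Suc, of "A + B" A B 0] by simp
    have "(\<lambda>n. (A + B) *v (v (n + t) - Mop A B t (v n)) - e (n + t)) \<longlonglongrightarrow> (A + B) *v 0 - 0"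
      by (intro tendsto_intros l1 LIMSEQ_ignore_initial_segment e0)
    then show ?case unfolding eq by simp
  qed
  define f where "f w = norm (A *v w) * norm (B *v w)" for w
  have fv: "(\<lambda>n. f (v n)) \<longlonglongrightarrow> 0"
  proof (rule Lim_null_comparison)
    show "eventually (\<lambda>n. norm (f (v n)) \<le> norm (e n) * norm \<xi>) sequentially"
    proof (rule always_eventually, rule allI)
      fix n
      have "norm (X n *v v n) \<le> norm \<xi>" using vle[of "Suc n"] by (simp add: vS)
      moreover have "f (v n) = norm (e n) * norm (X n *v v n)"
        by (cases "q n") (simp_all add: f_def e_def X_def Y_def)
      ultimately show "norm (f (v n)) \<le> norm (e n) * norm \<xi>"
        by (simp add: f_def mult_left_mono)
    qed
    show "(\<lambda>n. norm (e n) * norm \<xi>) \<longlonglongrightarrow> 0"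
      using tendsto_mult_left_zero[OF tendsto_norm_zero[OF e0]] by simp
  qed
  have "bounded (range v)" using vle by (auto simp: bounded_iff)
  then obtain \<eta> a where a: "strict_mono a" and lim: "(v \<circ> a) \<longlonglongrightarrow> \<eta>"
    using bounded_imp_convergent_subsequence by blast
  have limj: "(\<lambda>j. v (a j)) \<longlonglongrightarrow> \<eta>" using lim by (simp add: comp_def)
  have "goodv A B \<eta>" unfolding goodv_def
  proof
    fix t
    have sm: "strict_mono (\<lambda>j. a j + t)" using a by (simp add: strict_mono_def)
    have d: "(\<lambda>j. v (a j + t) - Mop A B t (v (a j))) \<longlonglongrightarrow> 0"
      using LIMSEQ_subseq_LIMSEQ[OF Dt a] by (simp add: comp_def)
    have "(\<lambda>j. (v (a j + t) - Mop A B t (v (a j))) + Mop A B t (v (a j))) \<longlonglongrightarrow> 0 + Mop A B t \<eta>"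
      by (intro tendsto_intros d lim_Mop limj)
    then have vt: "(\<lambda>j. v (a j + t)) \<longlonglongrightarrow> Mop A B t \<eta>" by simp
    have l1: "(\<lambda>j. f (v (a j + t))) \<longlonglongrightarrow> f (Mop A B t \<eta>)"
      unfolding f_def using lim_MMop[OF vt, of _ A B 0] by (intro tendsto_intros) simp_all
    have l2: "(\<lambda>j. f (v (a j + t))) \<longlonglongrightarrow> 0"
      using LIMSEQ_subseq_LIMSEQ[OF fv sm] by (simp add: comp_def)
    have "f (Mop A B t \<eta>) = 0" using LIMSEQ_unique[OF l1 l2] .
    then show "A *v Mop A B t \<eta> = 0 \<or> B *v Mop A B t \<eta> = 0" by (simp add: f_def)
  qed
  moreover have "\<eta> \<noteq> 0"
  proof -
    have "(\<lambda>j. norm (v (a j))) \<longlonglongrightarrow> norm \<eta>" using tendsto_norm[OF limj] .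
    then have "L \<le> norm \<eta>" using Lle by (intro LIMSEQ_le_const) auto
    then show ?thesis using Lpos by auto
  qed
  ultimately show ?thesis by blast
qed

lemma periodic_final:
  assumes g: "goodv A B y" and y0: "y \<noteq> 0" and p0: "p > 0"
    and per: "\<And>t. A *v Mop A B t y = 0 \<longleftrightarrow> A *v Mop A B (t + p) y = 0"
  shows "\<exists>\<xi> r. periodic_ray r \<and> contained_in_ray A B \<xi> r"
proof -
  have per2: "A *v Mop A B (t + k * p) y = 0 \<longleftrightarrow> A *v Mop A B t y = 0" for t k
    proof (induction k)
    case (Suc k)
    have "t + Suc k * p = (t + k * p) + p" by simp
    then show ?case using Suc per[of "t + k * p"] by (metis (no_types))
  qed simp
  have perm: "A *v Mop A B t y = 0 \<longleftrightarrow> A *v Mop A B (t mod p) y = 0" for t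
    using per2[of "t mod p" "t div p"] by (simp add: mult.commute)
  define r where "r i = (A *v Mop A B (i mod p) y = 0)" for i
  define w where "w = map r [0..<p]"
  have "periodic_ray r"
    unfolding periodic_ray_def
    by (rule exI[of _ w]) (use p0 in \<open>auto simp: w_def r_def\<close>)
  moreover have wa: "word_act A B (ray_prefix r n) y = Mop A B n y" for n
  proof (induction n)
    case 0 then show ?case by (simp add: word_act_def ray_prefix_def)
  next
    case (Suc n)
    have gn: "A *v Mop A B n y = 0 \<or> B *v Mop A B n y = 0" using g by (simp add: goodv_def)
    show ?case
    proof (cases "r n")
      case True
      then have "A *v Mop A B n y = 0" using perm by (simp add: r_def)
      then show ?thesis using True Suc by (simp add: word_act_Suc Mop_Suc matrix_vector_mult_add_rdistrib)
    next
      case False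
      then have "B *v Mop A B n y = 0" using perm gn by (simp add: r_def)
      then show ?thesis using False Suc by (simp add: word_act_Suc Mop_Suc matrix_vector_mult_add_rdistrib)
    qed
  qed
  then have "contained_in_ray A B y r"
    using y0 g good_norm by (simp add: contained_in_ray_def)
  ultimately show ?thesis by blast
qed

end

theorem proposition2p10:
  fixes A B :: "complex ^ 'n ^ 'n"
  assumes "P_module A B"
  shows "(\<forall>\<xi>::complex ^ 'n. \<xi> \<noteq> 0 \<longrightarrow> annihilated_by_all_rays A B \<xi>)
         \<or> (\<exists>\<xi> p. periodic_ray p \<and> contained_in_ray A B \<xi> p)"
proof (cases "\<forall>\<xi>::complex ^ 'n. \<xi> \<noteq> 0 \<longrightarrow> annihilated_by_all_rays A B \<xi>")
  case True
  then show ?thesis by blast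
next
  case False
  then obtain \<xi> :: "complex ^ 'n" and q where
    "\<not> (\<lambda>n. norm (word_act A B (ray_prefix q n) \<xi>)) \<longlonglongrightarrow> 0"
    unfolding annihilated_by_all_rays_def by blast
  then obtain \<eta> where "goodv A B \<eta>" "\<eta> \<noteq> 0" using step1[OF assms] by blast
  then obtain y p where "goodv A B y" "y \<noteq> 0" "p > 0"
    "\<forall>t. A *v Mop A B t y = 0 \<longleftrightarrow> A *v Mop A B (t + p) y = 0"
    using step2[OF assms] by blast
  then have "\<exists>\<xi> r. periodic_ray r \<and> contained_in_ray A B \<xi> r"
    using periodic_final[OF assms] by blast
  then show ?thesis by blast
qed

end
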